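(* Assume $\gamma\ge1$. Then $$\log\frac{\det(\underline V_{i,t}^{-1})}{\det(\Lambda^0_{i,t})}\le2d\log\Big\{\frac{3k(k+1)}{8}+\gamma k+2\lambda e_k\Big\}.$$
   Context: $d,k\ge1$, $i+t-1\le k$. $C_{j,u}=[1,0_{j-1}^\top,1,0_{k-j+u-1}^\top,1,0_{k-u}^\top]\otimes I_d\in\mathbb R^{d\times(2k+1)d}$. $V_{0,k}=\mathrm{diag}(\gamma I_d,\gamma I_{kd}+\lambda L_{\rm user}\otimes I_d,\gamma I_{kd}+\lambda L_{\rm time}\otimes I_d)$ with $\lambda\ge0$, where $L_{\rm user},L_{\rm time}$ are the Laplacians ($L=QQ^\top$, $Q$ signed incidence matrix) of a user graph and a time graph on $k$ vertices each, and $e_k$ is the total number of edges of the two graphs. Pairs are ordered $(1,1),(1,2),(2,1),(1,3),(2,2),(3,1),\dots$ and $\mathcal O_{i,t}$ is the set of pairs strictly before $(i,t)$ (all with $j+u-1\le k$). For $(j,u)\in\mathcal O_{i,t}$: $x_{j,u}\in\mathbb R^d$ with $\|x_{j,u}\|\le1$, $\phi_{j,u}=C_{j,u}^\top x_{j,u}$, $\tilde\sigma^2_{j,u}=\pi_{j,u}(1-\pi_{j,u})$ with $\pi_{j,u}\in(0,1)$. $V_{i,t}=V_{0,k}+\sum_{(j,u)\in\mathcal O_{i,t}}\tilde\sigma^2_{j,u}\phi_{j,u}\phi_{j,u}^\top$, $\underline V_{i,t}=(C_{i,t}V_{i,t}^{-1}C_{i,t}^\top)^{-1}$, $\Lambda^0_{i,t}=C_{i,t}V_{i,t}^{-1}V_{0,k}V_{i,t}^{-1}C_{i,t}^\top$.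 *)

theory Defs
  imports "Jordan_Normal_Form.Gauss_Jordan_Elimination" "Jordan_Normal_Form.Determinant"
begin

(* Matrix inverse (total version; only applied to invertible matrices here) *)
definition minv :: "real mat \<Rightarrow> real mat" where
  "minv A = (case mat_inverse A of Some B \<Rightarrow> B | None \<Rightarrow> 0\<^sub>m (dim_row A) (dim_col A))"

definition kron :: "real mat \<Rightarrow> real mat \<Rightarrow> real mat" where
  "kron A B = mat (dim_row A * dim_row B) (dim_col A * dim_col B)
     (\<lambda>(a, b). A $$ (a div dim_row B, b div dim_col B) * B $$ (a mod dim_row B, b mod dim_col B))"

definition incidence :: "nat \<Rightarrow> (nat \<times> nat) list \<Rightarrow> real mat" where
  "incidence k es = mat k (length es)
     (\<lambda>(v, e). if v = fst (es ! e) then 1 else if v = snd (es ! e) then -1 else 0)"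

definition laplacian :: "nat \<Rightarrow> (nat \<times> nat) list \<Rightarrow> real mat" where
  "laplacian k es = incidence k es * transpose_mat (incidence k es)"

definition simple_graph :: "nat \<Rightarrow> (nat \<times> nat) list \<Rightarrow> bool" where
  "simple_graph k es \<longleftrightarrow> distinct es \<and> (\<forall>(a, b) \<in> set es. a < b \<and> b < k)"

definition Cmat :: "nat \<Rightarrow> nat \<Rightarrow> nat \<Rightarrow> nat \<Rightarrow> real mat" where
  "Cmat d k j u = kron (mat 1 (2 * k + 1) (\<lambda>(_, b). if b = 0 \<or> b = j \<or> b = k + u then 1 else 0))
                       (1\<^sub>m d)"

definition V0 :: "nat \<Rightarrow> nat \<Rightarrow> real \<Rightarrow> real \<Rightarrow> (nat \<times> nat) list \<Rightarrow> (nat \<times> nat) list \<Rightarrow> real mat" where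
  "V0 d k \<gamma> lam Eu Et =
     four_block_mat (\<gamma> \<cdot>\<^sub>m 1\<^sub>m d) (0\<^sub>m d (2 * k * d)) (0\<^sub>m (2 * k * d) d)
       (four_block_mat (\<gamma> \<cdot>\<^sub>m 1\<^sub>m (k * d) + lam \<cdot>\<^sub>m kron (laplacian k Eu) (1\<^sub>m d))
          (0\<^sub>m (k * d) (k * d)) (0\<^sub>m (k * d) (k * d))
          (\<gamma> \<cdot>\<^sub>m 1\<^sub>m (k * d) + lam \<cdot>\<^sub>m kron (laplacian k Et) (1\<^sub>m d)))"

(* ordering of pairs: (1,1),(1,2),(2,1),(1,3),(2,2),(3,1),... *)
definition pair_before :: "nat \<times> nat \<Rightarrow> nat \<times> nat \<Rightarrow> bool" where
  "pair_before p q \<longleftrightarrow> fst p + snd p < fst q + snd q \<or> (fst p + snd p = fst q + snd q \<and> fst p < fst q)"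

definition Obs :: "nat \<Rightarrow> nat \<Rightarrow> nat \<Rightarrow> (nat \<times> nat) set" where
  "Obs k i t = {(j, u). 1 \<le> j \<and> 1 \<le> u \<and> j + u - 1 \<le> k \<and> pair_before (j, u) (i, t)}"

definition phi :: "nat \<Rightarrow> nat \<Rightarrow> (nat \<times> nat \<Rightarrow> real vec) \<Rightarrow> nat \<times> nat \<Rightarrow> real vec" where
  "phi d k x p = transpose_mat (Cmat d k (fst p) (snd p)) *\<^sub>v x p"

definition Vmat :: "nat \<Rightarrow> nat \<Rightarrow> real \<Rightarrow> real \<Rightarrow> (nat \<times> nat) list \<Rightarrow> (nat \<times> nat) list
     \<Rightarrow> (nat \<times> nat \<Rightarrow> real vec) \<Rightarrow> (nat \<times> nat \<Rightarrow> real) \<Rightarrow> nat \<Rightarrow> nat \<Rightarrow> real mat" where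
  "Vmat d k \<gamma> lam Eu Et x \<pi> i t =
     mat ((2 * k + 1) * d) ((2 * k + 1) * d) (\<lambda>(a, b).
       V0 d k \<gamma> lam Eu Et $$ (a, b)
       + (\<Sum>p\<in>Obs k i t. \<pi> p * (1 - \<pi> p) * (phi d k x p $ a) * (phi d k x p $ b)))"

definition Vbar :: "nat \<Rightarrow> nat \<Rightarrow> real \<Rightarrow> real \<Rightarrow> (nat \<times> nat) list \<Rightarrow> (nat \<times> nat) list
     \<Rightarrow> (nat \<times> nat \<Rightarrow> real vec) \<Rightarrow> (nat \<times> nat \<Rightarrow> real) \<Rightarrow> nat \<Rightarrow> nat \<Rightarrow> real mat" where
  "Vbar d k \<gamma> lam Eu Et x \<pi> i t =
     minv (Cmat d k i t * minv (Vmat d k \<gamma> lam Eu Et x \<pi> i t) * transpose_mat (Cmat d k i t))"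

definition Lambda0 :: "nat \<Rightarrow> nat \<Rightarrow> real \<Rightarrow> real \<Rightarrow> (nat \<times> nat) list \<Rightarrow> (nat \<times> nat) list
     \<Rightarrow> (nat \<times> nat \<Rightarrow> real vec) \<Rightarrow> (nat \<times> nat \<Rightarrow> real) \<Rightarrow> nat \<Rightarrow> nat \<Rightarrow> real mat" where
  "Lambda0 d k \<gamma> lam Eu Et x \<pi> i t =
     Cmat d k i t * minv (Vmat d k \<gamma> lam Eu Et x \<pi> i t) * V0 d k \<gamma> lam Eu Et
       * minv (Vmat d k \<gamma> lam Eu Et x \<pi> i t) * transpose_mat (Cmat d k i t)"

end

theory Submission
  imports Defs
begin


definition qf :: "real mat \<Rightarrow> nat \<Rightarrow> (nat \<Rightarrow> real) \<Rightarrow> real" where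
  "qf M n f = (\<Sum>i<n. \<Sum>j<n. f i * M $$ (i,j) * f j)"

definition symm :: "real mat \<Rightarrow> nat \<Rightarrow> bool" where
  "symm M n \<longleftrightarrow> (\<forall>i<n. \<forall>j<n. M $$ (i,j) = M $$ (j,i))"

definition schur :: "real mat \<Rightarrow> nat \<Rightarrow> real mat" where
  "schur M n = mat n n (\<lambda>(i,j). M $$ (Suc i, Suc j) - M $$ (Suc i, 0) * M $$ (0, Suc j) / M $$ (0,0))"

definition ext :: "real \<Rightarrow> (nat \<Rightarrow> real) \<Rightarrow> nat \<Rightarrow> real" where
  "ext c y i = (if i = 0 then c else y (i - 1))"

lemma sum_Suc_split: "(\<Sum>i<Suc n. g i) = g 0 + (\<Sum>i<n. g (Suc i))"
  by (rule sum.lessThan_Suc_shift)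

lemma qf_ext:
  assumes S: "symm M (Suc n)" and a: "M $$ (0,0) \<noteq> 0"
  shows "qf M (Suc n) (ext c y) = qf (schur M n) n y
     + (M $$ (0,0) * c + (\<Sum>j<n. M $$ (0, Suc j) * y j))^2 / M $$ (0,0)"
proof -
  define a where "a = M $$ (0,0)"
  define b where "b = (\<Sum>j<n. M $$ (0, Suc j) * y j)"
  have symc: "M $$ (Suc i, 0) = M $$ (0, Suc i)" if "i < n" for i
    using S that unfolding symm_def by auto
  have "qf M (Suc n) (ext c y) = c * a * c + (\<Sum>j<n. c * M $$ (0, Suc j) * y j)
     + (\<Sum>i<n. y i * M $$ (Suc i, 0) * c + (\<Sum>j<n. y i * M $$ (Suc i, Suc j) * y j))"
    unfolding qf_def sum_Suc_split ext_def a_def by (simp add: sum.distrib)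
  also have "(\<Sum>i<n. y i * M $$ (Suc i, 0) * c + (\<Sum>j<n. y i * M $$ (Suc i, Suc j) * y j))
     = (\<Sum>i<n. y i * M $$ (Suc i, 0) * c) + (\<Sum>i<n. (\<Sum>j<n. y i * M $$ (Suc i, Suc j) * y j))"
    by (simp add: sum.distrib)
  also have "(\<Sum>i<n. y i * M $$ (Suc i, 0) * c) = c * b"
    unfolding b_def sum_distrib_left by (rule sum.cong, auto simp: symc)
  also have "(\<Sum>j<n. c * M $$ (0, Suc j) * y j) = c * b"
    unfolding b_def sum_distrib_left by (rule sum.cong, auto)
  finally have 1: "qf M (Suc n) (ext c y) = c * a * c + c * b + (c * b + (\<Sum>i<n. \<Sum>j<n. y i * M $$ (Suc i, Suc j) * y j))" .
  have "qf (schur M n) n y = (\<Sum>i<n. \<Sum>j<n. y i * M $$ (Suc i, Suc j) * y j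
      - (y i * M $$ (0, Suc i)) * (M $$ (0, Suc j) * y j) / a)"
    unfolding qf_def schur_def a_def
    by (intro sum.cong refl, auto simp: symc algebra_simps)
  also have "\<dots> = (\<Sum>i<n. \<Sum>j<n. y i * M $$ (Suc i, Suc j) * y j) - b * b / a"
    unfolding b_def sum_subtractf sum_divide_distrib sum_product by (simp add: mult.commute)
  finally have 2: "qf (schur M n) n y = (\<Sum>i<n. \<Sum>j<n. y i * M $$ (Suc i, Suc j) * y j) - b * b / a" .
  show ?thesis unfolding 1 2 a_def[symmetric] b_def[symmetric] using a unfolding a_def[symmetric]
    by (simp add: field_simps power2_eq_square)
qed

lemma det_schur:
  assumes M: "M \<in> carrier_mat (Suc n) (Suc n)" and a: "M $$ (0,0) \<noteq> 0"
  shows "det M = M $$ (0,0) * det (schur M n)"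
proof -
  define E where "E = mat (Suc n) (Suc n) (\<lambda>(i,j). if i = j then 1 else if j = 0 then - M $$ (i,0) / M $$ (0,0) else 0)"
  have E: "E \<in> carrier_mat (Suc n) (Suc n)" unfolding E_def by simp
  have dE: "det E = 1"
  proof -
    have "det E = prod_list (diag_mat E)"
      by (rule det_lower_triangular[OF _ E], auto simp: E_def)
    also have "diag_mat E = map (\<lambda>_. 1) [0..<Suc n]" unfolding diag_mat_def E_def by auto
    also have "prod_list \<dots> = 1" by (induct n, auto)
    finally show ?thesis .
  qed
  define A1 where "A1 = mat 1 1 (\<lambda>_. M $$ (0,0))"
  define A2 where "A2 = mat 1 n (\<lambda>(_,j). M $$ (0, Suc j))"
  have EM: "E * M = four_block_mat A1 A2 (0\<^sub>m n 1) (schur M n)"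
  proof (rule eq_matI)
    fix i j assume i: "i < dim_row (four_block_mat A1 A2 (0\<^sub>m n 1) (schur M n))"
      and j: "j < dim_col (four_block_mat A1 A2 (0\<^sub>m n 1) (schur M n))"
    hence i': "i < Suc n" and j': "j < Suc n" by (auto simp: A1_def schur_def)
    have "(E * M) $$ (i,j) = (\<Sum>l<Suc n. E $$ (i,l) * M $$ (l,j))"
      using i' j' M E by (simp add: scalar_prod_def lessThan_atLeast0)
    also have "\<dots> = E $$ (i,0) * M $$ (0,j) + (\<Sum>l<n. E $$ (i, Suc l) * M $$ (Suc l, j))"
      by (rule sum.lessThan_Suc_shift)
    also have "\<dots> = (if i = 0 then M $$ (0,j) else M $$ (i,j) - M $$ (i,0) / M $$ (0,0) * M $$ (0,j))"
    proof (cases i)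
      case 0 thus ?thesis using i' by (simp add: E_def)
    next
      case (Suc i0)
      have "(\<Sum>l<n. E $$ (i, Suc l) * M $$ (Suc l, j)) = (\<Sum>l<n. if l = i0 then M $$ (i, j) else 0)"
        using i' Suc by (intro sum.cong refl, auto simp: E_def)
      also have "\<dots> = M $$ (i,j)" using i' Suc by simp
      finally show ?thesis using i' Suc by (simp add: E_def)
    qed
    also have "\<dots> = four_block_mat A1 A2 (0\<^sub>m n 1) (schur M n) $$ (i,j)"
      using i' j' a by (cases i; cases j; auto simp: A1_def A2_def schur_def)
    finally show "(E * M) $$ (i,j) = four_block_mat A1 A2 (0\<^sub>m n 1) (schur M n) $$ (i,j)" .
  qed (insert M, auto simp: E_def A1_def schur_def)
  have "det M = det (E * M)" using det_mult[OF E M] dE by simp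
  also have "\<dots> = det A1 * det (schur M n)" unfolding EM
    by (rule det_four_block_mat_lower_left_zero_col, auto simp: A1_def A2_def schur_def)
  also have "det A1 = M $$ (0,0)" by (subst det_single, auto simp: A1_def)
  finally show ?thesis .
qed

lemma qf_e0: "qf M (Suc n) (ext 1 (\<lambda>_. 0)) = M $$ (0,0)"
  unfolding qf_def sum_Suc_split ext_def by simp

lemma symm_schur: "symm M (Suc n) \<Longrightarrow> symm (schur M n) n"
  unfolding symm_def schur_def by auto

lemma det_mono:
  "P \<in> carrier_mat n n \<Longrightarrow> Q \<in> carrier_mat n n \<Longrightarrow> symm P n \<Longrightarrow> symm Q n
   \<Longrightarrow> (\<forall>f. (\<exists>i<n. f i \<noteq> 0) \<longrightarrow> 0 < qf P n f) \<Longrightarrow> (\<forall>f. qf P n f \<le> qf Q n f)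
   \<Longrightarrow> 0 < det P \<and> det P \<le> det Q"
proof (induction n arbitrary: P Q)
  case 0 thus ?case by simp
next
  case (Suc n)
  note P = Suc.prems(1) and Q = Suc.prems(2) and sP = Suc.prems(3) and sQ = Suc.prems(4)
    and pd = Suc.prems(5) and le = Suc.prems(6)
  have aP: "0 < P $$ (0,0)"
    using pd[rule_format, of "ext 1 (\<lambda>_. 0)"] by (auto simp: qf_e0 ext_def)
  have aQ: "P $$ (0,0) \<le> Q $$ (0,0)"
    using le[rule_format, of "ext 1 (\<lambda>_. 0)"] by (auto simp: qf_e0)
  hence aQ': "0 < Q $$ (0,0)" using aP by linarith
  have pdS: "\<forall>y. (\<exists>i<n. y i \<noteq> 0) \<longrightarrow> 0 < qf (schur P n) n y"
  proof (intro allI impI)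
    fix y :: "nat \<Rightarrow> real" assume "\<exists>i<n. y i \<noteq> 0"
    then obtain i where i: "i < n" "y i \<noteq> 0" by auto
    define c where "c = - (\<Sum>j<n. P $$ (0, Suc j) * y j) / P $$ (0,0)"
    have "0 < qf P (Suc n) (ext c y)"
      using pd[rule_format, of "ext c y"] i by (force simp: ext_def)
    also have "qf P (Suc n) (ext c y) = qf (schur P n) n y"
      using qf_ext[OF sP, of c y] aP by (simp add: c_def)
    finally show "0 < qf (schur P n) n y" .
  qed
  have leS: "\<forall>y. qf (schur P n) n y \<le> qf (schur Q n) n y"
  proof
    fix y :: "nat \<Rightarrow> real"
    define c where "c = - (\<Sum>j<n. Q $$ (0, Suc j) * y j) / Q $$ (0,0)"
    have "qf (schur P n) n y \<le> qf P (Suc n) (ext c y)"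
      using qf_ext[OF sP, of c y] aP by simp
    also have "\<dots> \<le> qf Q (Suc n) (ext c y)" using le by auto
    also have "\<dots> = qf (schur Q n) n y"
      using qf_ext[OF sQ, of c y] aQ' by (simp add: c_def)
    finally show "qf (schur P n) n y \<le> qf (schur Q n) n y" .
  qed
  have IH: "0 < det (schur P n) \<and> det (schur P n) \<le> det (schur Q n)"
    by (rule Suc.IH, insert symm_schur[OF sP] symm_schur[OF sQ] pdS leS, auto simp: schur_def)
  have "det P = P $$ (0,0) * det (schur P n)" using det_schur[OF P] aP by simp
  moreover have "det Q = Q $$ (0,0) * det (schur Q n)" using det_schur[OF Q] aQ' by simp
  ultimately show ?case using IH aP aQ by (simp add: mult_mono)
qed



lemma cauchy_schwarz_sum:
  fixes a b :: "nat \<Rightarrow> real"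
  shows "(\<Sum>i<n. a i * b i)^2 \<le> (\<Sum>i<n. (a i)^2) * (\<Sum>i<n. (b i)^2)"
proof -
  have "0 \<le> (\<Sum>i<n. \<Sum>j<n. (a i * b j - a j * b i)^2)"
    by (intro sum_nonneg, auto)
  also have "\<dots> = (\<Sum>i<n. \<Sum>j<n. (a i)^2 * (b j)^2 + (a j)^2 * (b i)^2 - 2 * ((a i * b i) * (a j * b j)))"
    by (intro sum.cong refl, simp add: power2_eq_square algebra_simps)
  also have "\<dots> = (\<Sum>i<n. \<Sum>j<n. (a i)^2 * (b j)^2) + (\<Sum>i<n. \<Sum>j<n. (a j)^2 * (b i)^2)
      - 2 * (\<Sum>i<n. \<Sum>j<n. (a i * b i) * (a j * b j))"
    by (simp add: sum_subtractf sum.distrib sum_distrib_left)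
  also have "(\<Sum>i<n. \<Sum>j<n. (a i)^2 * (b j)^2) = (\<Sum>i<n. (a i)^2) * (\<Sum>i<n. (b i)^2)"
    by (simp add: sum_product)
  also have "(\<Sum>i<n. \<Sum>j<n. (a j)^2 * (b i)^2) = (\<Sum>i<n. \<Sum>j<n. (b i)^2 * (a j)^2)"
    by (simp add: mult.commute)
  also have "\<dots> = (\<Sum>i<n. (b i)^2) * (\<Sum>i<n. (a i)^2)"
    by (simp add: sum_product)
  also have "(\<Sum>i<n. \<Sum>j<n. (a i * b i) * (a j * b j)) = (\<Sum>i<n. a i * b i)^2"
    by (simp add: sum_product power2_eq_square)
  finally show ?thesis by (simp add: mult.commute)
qed

lemma sum_add_split: fixes m n :: nat shows "(\<Sum>i<m+n. g i) = (\<Sum>i<m. g i) + (\<Sum>i<n. g (m + i))"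
  by (induct n, auto simp: add.assoc)

lemma sum_blocks: fixes m d :: nat shows "(\<Sum>a<m*d. g a) = (\<Sum>i<m. \<Sum>r<d. g (i*d + r))"
proof (induct m)
  case (Suc m)
  have "Suc m * d = m * d + d" by simp
  hence "(\<Sum>a<Suc m*d. g a) = (\<Sum>a<m*d. g a) + (\<Sum>r<d. g (m*d + r))"
    by (simp only: sum_add_split)
  thus ?case using Suc by simp
qed simp

lemma qf_cong: "(\<And>i. i < n \<Longrightarrow> f i = g i) \<Longrightarrow> qf M n f = qf M n g"
  unfolding qf_def by auto

lemma qf_add: "A \<in> carrier_mat n n \<Longrightarrow> B \<in> carrier_mat n n \<Longrightarrow> qf (A + B) n f = qf A n f + qf B n f"
  unfolding qf_def by (simp add: sum.distrib[symmetric] algebra_simps)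

lemma qf_smult: "A \<in> carrier_mat n n \<Longrightarrow> qf (c \<cdot>\<^sub>m A) n f = c * qf A n f"
  unfolding qf_def by (simp add: sum_distrib_left algebra_simps)

lemma qf_one: "qf (1\<^sub>m n) n f = (\<Sum>i<n. (f i)^2)"
proof -
  have "(\<Sum>j<n. f i * 1\<^sub>m n $$ (i,j) * f j) = (\<Sum>j<n. if j = i then f i * f i else 0)" if "i < n" for i
    using that by (intro sum.cong refl) auto
  thus ?thesis unfolding qf_def by (simp add: power2_eq_square)
qed

lemma qf_block:
  assumes A: "A \<in> carrier_mat n1 n1" and B: "B \<in> carrier_mat n2 n2"
  shows "qf (four_block_mat A (0\<^sub>m n1 n2) (0\<^sub>m n2 n1) B) (n1+n2) f = qf A n1 f + qf B n2 (\<lambda>i. f (n1+i))"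
  using A B unfolding qf_def sum_add_split by (simp add: sum.distrib)

lemma symm_block:
  assumes A: "A \<in> carrier_mat n1 n1" and B: "B \<in> carrier_mat n2 n2" and "symm A n1" "symm B n2"
  shows "symm (four_block_mat A (0\<^sub>m n1 n2) (0\<^sub>m n2 n1) B) (n1+n2)"
  using assms unfolding symm_def by auto



lemma laplacian_carrier: "laplacian k es \<in> carrier_mat k k"
  unfolding laplacian_def incidence_def carrier_mat_def by simp

lemma laplacian_entry: "i < k \<Longrightarrow> j < k \<Longrightarrow> laplacian k es $$ (i,j)
   = (\<Sum>e<length es. incidence k es $$ (i,e) * incidence k es $$ (j,e))"
  unfolding laplacian_def by (simp add: incidence_def scalar_prod_def lessThan_atLeast0)

lemma symm_laplacian: "symm (laplacian k es) k"
  unfolding symm_def by (auto simp: laplacian_entry mult.commute)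

lemma qf_laplacian: "0 \<le> qf (laplacian k es) k g"
proof -
  let ?Q = "incidence k es"
  have "qf (laplacian k es) k g = (\<Sum>i<k. \<Sum>j<k. \<Sum>e<length es. (g i * ?Q $$ (i,e)) * (g j * ?Q $$ (j,e)))"
    unfolding qf_def by (intro sum.cong refl, simp add: laplacian_entry sum_distrib_left sum_distrib_right algebra_simps)
  also have "\<dots> = (\<Sum>e<length es. (\<Sum>i<k. g i * ?Q $$ (i,e)) * (\<Sum>j<k. g j * ?Q $$ (j,e)))"
    by (simp add: sum_product, subst sum.swap, rule sum.cong, simp, subst sum.swap, simp)
  also have "\<dots> \<ge> 0" by (intro sum_nonneg, auto)
  finally show ?thesis .
qed

lemma kron_carrier: "kron A B \<in> carrier_mat (dim_row A * dim_row B) (dim_col A * dim_col B)"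
  unfolding kron_def by simp

lemma kron_entry: assumes L: "L \<in> carrier_mat k k" and a: "a < k * d" and b: "b < k * d"
  shows "kron L (1\<^sub>m d) $$ (a,b) = L $$ (a div d, b div d) * (if a mod d = b mod d then 1 else 0)"
proof -
  have d: "0 < d" using a by (cases d, auto)
  show ?thesis using L a b d unfolding kron_def by (auto simp: mult.commute)
qed

lemma idx_lt: fixes i k r d :: nat assumes "i < k" "r < d" shows "i*d + r < k*d"
proof -
  have "(i+1)*d \<le> k*d" using assms by (intro mult_right_mono) auto
  thus ?thesis using assms by simp
qed

lemma qf_kron:
  assumes L: "L \<in> carrier_mat k k"
  shows "qf (kron L (1\<^sub>m d)) (k*d) f = (\<Sum>r<d. qf L k (\<lambda>i. f (i*d + r)))"
proof (cases "d = 0")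
  case True thus ?thesis by (simp add: qf_def)
next
  case False
  hence d: "0 < d" by simp
  have e: "kron L (1\<^sub>m d) $$ (i*d+r, j*d+s) = L $$ (i,j) * (if r = s then 1 else 0)"
    if "i < k" "j < k" "r < d" "s < d" for i j r s
  proof -
    have "i*d + r < k*d" "j*d + s < k*d" using that idx_lt by auto
    thus ?thesis using kron_entry[OF L] that by simp
  qed
  have "qf (kron L (1\<^sub>m d)) (k*d) f
     = (\<Sum>i<k. \<Sum>r<d. \<Sum>j<k. \<Sum>s<d. f (i*d+r) * kron L (1\<^sub>m d) $$ (i*d+r, j*d+s) * f (j*d+s))"
    unfolding qf_def sum_blocks ..
  also have "\<dots> = (\<Sum>i<k. \<Sum>r<d. \<Sum>j<k. \<Sum>s<d. if s = r then f (i*d+r) * L $$ (i,j) * f (j*d+r) else 0)"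
    by (intro sum.cong refl, simp add: e)
  also have "\<dots> = (\<Sum>i<k. \<Sum>r<d. \<Sum>j<k. f (i*d+r) * L $$ (i,j) * f (j*d+r))"
    by simp
  also have "\<dots> = (\<Sum>r<d. \<Sum>i<k. \<Sum>j<k. f (i*d+r) * L $$ (i,j) * f (j*d+r))"
    by (rule sum.swap)
  finally show ?thesis unfolding qf_def .
qed

lemma qf_kron_nonneg: "0 \<le> qf (kron (laplacian k es) (1\<^sub>m d)) (k*d) f"
  unfolding qf_kron[OF laplacian_carrier] by (intro sum_nonneg qf_laplacian)

lemma symm_kron: assumes L: "L \<in> carrier_mat k k" and S: "symm L k"
  shows "symm (kron L (1\<^sub>m d)) (k*d)"
proof -
  { fix a b assume a: "a < k*d" and b: "b < k*d"
    have d: "0 < d" using a by (cases d, auto)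
    have "a div d < k" "b div d < k" using a b d by (auto simp: div_less_iff_less_mult)
    hence "kron L (1\<^sub>m d) $$ (a,b) = kron L (1\<^sub>m d) $$ (b,a)"
      using kron_entry[OF L a b] kron_entry[OF L b a] S unfolding symm_def by auto }
  thus ?thesis unfolding symm_def by auto
qed



lemma V0_shape: "V0 d k \<gamma> lam Eu Et =
  four_block_mat (\<gamma> \<cdot>\<^sub>m 1\<^sub>m d) (0\<^sub>m d (k*d + k*d)) (0\<^sub>m (k*d + k*d) d)
       (four_block_mat (\<gamma> \<cdot>\<^sub>m 1\<^sub>m (k * d) + lam \<cdot>\<^sub>m kron (laplacian k Eu) (1\<^sub>m d))
          (0\<^sub>m (k * d) (k * d)) (0\<^sub>m (k * d) (k * d))
          (\<gamma> \<cdot>\<^sub>m 1\<^sub>m (k * d) + lam \<cdot>\<^sub>m kron (laplacian k Et) (1\<^sub>m d)))"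
proof -
  have eq: "2*k*d = k*d + k*d" by simp
  show ?thesis unfolding V0_def eq ..
qed

lemma kronL_carrier: "kron (laplacian k es) (1\<^sub>m d) \<in> carrier_mat (k*d) (k*d)"
  using kron_carrier[of "laplacian k es" "1\<^sub>m d"] laplacian_carrier[of k es] by auto

lemma blk_carrier: "\<gamma> \<cdot>\<^sub>m 1\<^sub>m (k * d) + lam \<cdot>\<^sub>m kron (laplacian k es) (1\<^sub>m d) \<in> carrier_mat (k*d) (k*d)"
  using kronL_carrier by auto

lemma qf_blk: "qf (\<gamma> \<cdot>\<^sub>m 1\<^sub>m (k * d) + lam \<cdot>\<^sub>m kron (laplacian k es) (1\<^sub>m d)) (k*d) f
   = \<gamma> * (\<Sum>i<k*d. (f i)^2) + lam * qf (kron (laplacian k es) (1\<^sub>m d)) (k*d) f"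
proof -
  have c1: "\<gamma> \<cdot>\<^sub>m 1\<^sub>m (k * d) \<in> carrier_mat (k*d) (k*d)" by simp
  have c2: "lam \<cdot>\<^sub>m kron (laplacian k es) (1\<^sub>m d) \<in> carrier_mat (k*d) (k*d)"
    using kronL_carrier by (rule smult_carrier_mat)
  show ?thesis unfolding qf_add[OF c1 c2] qf_smult[OF one_carrier_mat] qf_smult[OF kronL_carrier] qf_one ..
qed

lemma symm_blk: "symm (\<gamma> \<cdot>\<^sub>m 1\<^sub>m (k * d) + lam \<cdot>\<^sub>m kron (laplacian k es) (1\<^sub>m d)) (k*d)"
proof -
  have K: "kron (laplacian k es) (1\<^sub>m d) \<in> carrier_mat (k*d) (k*d)" by (rule kronL_carrier)
  have sK: "symm (kron (laplacian k es) (1\<^sub>m d)) (k*d)" by (rule symm_kron[OF laplacian_carrier symm_laplacian])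
  show ?thesis unfolding symm_def
  proof (intro allI impI)
    fix i j assume ij: "i < k*d" "j < k*d"
    show "(\<gamma> \<cdot>\<^sub>m 1\<^sub>m (k * d) + lam \<cdot>\<^sub>m kron (laplacian k es) (1\<^sub>m d)) $$ (i, j) =
          (\<gamma> \<cdot>\<^sub>m 1\<^sub>m (k * d) + lam \<cdot>\<^sub>m kron (laplacian k es) (1\<^sub>m d)) $$ (j, i)"
      using ij K sK[unfolded symm_def, rule_format, OF ij] by simp
  qed
qed

lemma dim_eq: fixes k d :: nat shows "(2*k+1)*d = d + (k*d + k*d)" by simp

lemma V0_carrier: "V0 d k \<gamma> lam Eu Et \<in> carrier_mat ((2*k+1)*d) ((2*k+1)*d)"
  unfolding V0_shape dim_eq
  by (intro four_block_carrier_mat blk_carrier smult_carrier_mat one_carrier_mat)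

lemma qf_V0:
  assumes lam: "0 \<le> lam"
  shows "\<gamma> * (\<Sum>i<(2*k+1)*d. (f i)^2) \<le> qf (V0 d k \<gamma> lam Eu Et) ((2*k+1)*d) f"
proof -
  let ?B1 = "\<gamma> \<cdot>\<^sub>m 1\<^sub>m (k * d) + lam \<cdot>\<^sub>m kron (laplacian k Eu) (1\<^sub>m d)"
  let ?B2 = "\<gamma> \<cdot>\<^sub>m 1\<^sub>m (k * d) + lam \<cdot>\<^sub>m kron (laplacian k Et) (1\<^sub>m d)"
  have c: "four_block_mat ?B1 (0\<^sub>m (k * d) (k * d)) (0\<^sub>m (k * d) (k * d)) ?B2 \<in> carrier_mat (k*d+k*d) (k*d+k*d)"
    using blk_carrier by auto
  have "qf (V0 d k \<gamma> lam Eu Et) ((2*k+1)*d) f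
      = \<gamma> * (\<Sum>i<d. (f i)^2) + (\<gamma> * (\<Sum>i<k*d. (f (d+i))^2) + lam * qf (kron (laplacian k Eu) (1\<^sub>m d)) (k*d) (\<lambda>i. f (d+i))
        + (\<gamma> * (\<Sum>i<k*d. (f (d+(k*d+i)))^2) + lam * qf (kron (laplacian k Et) (1\<^sub>m d)) (k*d) (\<lambda>i. f (d+(k*d+i)))))"
  proof -
    have c1: "\<gamma> \<cdot>\<^sub>m 1\<^sub>m d \<in> carrier_mat d d" by simp
    have "qf (V0 d k \<gamma> lam Eu Et) ((2*k+1)*d) f = qf (\<gamma> \<cdot>\<^sub>m 1\<^sub>m d) d f
       + qf (four_block_mat ?B1 (0\<^sub>m (k * d) (k * d)) (0\<^sub>m (k * d) (k * d)) ?B2) (k*d+k*d) (\<lambda>i. f (d+i))"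
      unfolding V0_shape dim_eq by (rule qf_block[OF c1 c])
    also have "qf (four_block_mat ?B1 (0\<^sub>m (k * d) (k * d)) (0\<^sub>m (k * d) (k * d)) ?B2) (k*d+k*d) (\<lambda>i. f (d+i))
       = qf ?B1 (k*d) (\<lambda>i. f (d+i)) + qf ?B2 (k*d) (\<lambda>i. f (d+(k*d+i)))"
      by (rule qf_block[OF blk_carrier blk_carrier])
    also have "qf (\<gamma> \<cdot>\<^sub>m 1\<^sub>m d) d f = \<gamma> * (\<Sum>i<d. (f i)^2)"
      by (simp only: qf_smult[OF one_carrier_mat] qf_one)
    finally show ?thesis by (simp only: qf_blk)
  qed
  also have "\<dots> \<ge> \<gamma> * (\<Sum>i<d. (f i)^2) + (\<gamma> * (\<Sum>i<k*d. (f (d+i))^2) + \<gamma> * (\<Sum>i<k*d. (f (d+(k*d+i)))^2))"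
  proof -
    have "0 \<le> lam * qf (kron (laplacian k Eu) (1\<^sub>m d)) (k*d) (\<lambda>i. f (d+i))"
      using lam qf_kron_nonneg by (rule mult_nonneg_nonneg)
    moreover have "0 \<le> lam * qf (kron (laplacian k Et) (1\<^sub>m d)) (k*d) (\<lambda>i. f (d+(k*d+i)))"
      using lam qf_kron_nonneg by (rule mult_nonneg_nonneg)
    ultimately show ?thesis by linarith
  qed
  also have "\<gamma> * (\<Sum>i<d. (f i)^2) + (\<gamma> * (\<Sum>i<k*d. (f (d+i))^2) + \<gamma> * (\<Sum>i<k*d. (f (d+(k*d+i)))^2))
     = \<gamma> * (\<Sum>i<(2*k+1)*d. (f i)^2)"
    by (simp only: dim_eq sum_add_split distrib_left)
  finally show ?thesis .
qed

lemma symm_V0: "symm (V0 d k \<gamma> lam Eu Et) ((2*k+1)*d)"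
proof -
  have s1: "symm (\<gamma> \<cdot>\<^sub>m 1\<^sub>m d) d" unfolding symm_def by auto
  have c: "four_block_mat (\<gamma> \<cdot>\<^sub>m 1\<^sub>m (k * d) + lam \<cdot>\<^sub>m kron (laplacian k Eu) (1\<^sub>m d)) (0\<^sub>m (k * d) (k * d)) (0\<^sub>m (k * d) (k * d))
     (\<gamma> \<cdot>\<^sub>m 1\<^sub>m (k * d) + lam \<cdot>\<^sub>m kron (laplacian k Et) (1\<^sub>m d)) \<in> carrier_mat (k*d+k*d) (k*d+k*d)"
    using blk_carrier by auto
  have c1: "\<gamma> \<cdot>\<^sub>m 1\<^sub>m d \<in> carrier_mat d d" by simp
  show ?thesis unfolding V0_shape dim_eq
    by (rule symm_block[OF c1 c s1 symm_block[OF blk_carrier blk_carrier symm_blk symm_blk]])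
qed



lemma Obs_sub: "Obs k i t \<subseteq> {1..k} \<times> {1..k}"
  unfolding Obs_def by auto

lemma Obs_finite: "finite (Obs k i t)"
  by (rule finite_subset[OF Obs_sub], auto)

lemma Obs_card: "card (Obs k i t) \<le> k * k"
proof -
  have "card (Obs k i t) \<le> card ({1..k} \<times> {1..k::nat})"
    by (rule card_mono[OF _ Obs_sub], auto)
  thus ?thesis by (simp add: card_cartesian_product)
qed

lemma Cmat_carrier: "Cmat d k j u \<in> carrier_mat d ((2*k+1)*d)"
  unfolding Cmat_def kron_def dim_row_mat(1) dim_col_mat(1) index_one_mat(2,3) mult_1 by (rule mat_carrier)
lemma Cmat_entry: assumes r: "r < d" and c: "c < (2*k+1)*d"
  shows "Cmat d k j u $$ (r,c) = (if c div d = 0 \<or> c div d = j \<or> c div d = k + u then 1 else 0)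
     * (if r = c mod d then 1 else 0)"
proof -
  let ?A = "mat 1 (2 * k + 1) (\<lambda>(_, b). if b = 0 \<or> b = j \<or> b = k + u then 1 else (0::real))"
  have d: "0 < d" using r by simp
  have cd: "c div d < 2*k+1" using c d by (simp add: div_less_iff_less_mult)
  have r1: "r < dim_row ?A * dim_row (1\<^sub>m d)" using r by simp
  have c1: "c < dim_col ?A * dim_col (1\<^sub>m d)" using c by simp
  have "Cmat d k j u $$ (r,c) = ?A $$ (r div d, c div d) * 1\<^sub>m d $$ (r mod d, c mod d)"
    unfolding Cmat_def kron_def index_mat(1)[OF r1 c1] by (simp only: case_prod_conv index_one_mat(2,3))
  also have rd: "r div d = 0" "r mod d = r" using r by auto
  hence "?A $$ (r div d, c div d) * 1\<^sub>m d $$ (r mod d, c mod d) = ?A $$ (0, c div d) * 1\<^sub>m d $$ (r, c mod d)"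
    by simp
  also have "?A $$ (0, c div d) = (if c div d = 0 \<or> c div d = j \<or> c div d = k + u then 1 else 0)"
    by (subst index_mat(1), simp, rule cd, simp only: case_prod_conv)
  also have "1\<^sub>m d $$ (r, c mod d) = (if r = c mod d then 1 else 0)"
    using r d by simp
  finally show ?thesis .
qed

lemma phi_entry: assumes x: "x p \<in> carrier_vec d" and a: "a < (2*k+1)*d"
  shows "phi d k x p $ a = (if a div d = 0 \<or> a div d = fst p \<or> a div d = k + snd p then x p $ (a mod d) else 0)"
proof -
  have d: "0 < d" using a by (cases d, auto)
  have C: "Cmat d k (fst p) (snd p) \<in> carrier_mat d ((2*k+1)*d)" by (rule Cmat_carrier)
  have "phi d k x p $ a = (\<Sum>r<d. Cmat d k (fst p) (snd p) $$ (r,a) * x p $ r)"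
    unfolding phi_def using C x a by (simp add: scalar_prod_def lessThan_atLeast0)
  also have "\<dots> = (\<Sum>r<d. if r = a mod d then (if a div d = 0 \<or> a div d = fst p \<or> a div d = k + snd p then x p $ (a mod d) else 0) else 0)"
  proof (intro sum.cong refl)
    fix r assume "r \<in> {..<d}"
    hence r: "r < d" by simp
    show "Cmat d k (fst p) (snd p) $$ (r,a) * x p $ r = (if r = a mod d then (if a div d = 0 \<or> a div d = fst p \<or> a div d = k + snd p then x p $ (a mod d) else 0) else 0)"
      unfolding Cmat_entry[OF r a] by auto
  qed
  also have "\<dots> = (if a div d = 0 \<or> a div d = fst p \<or> a div d = k + snd p then x p $ (a mod d) else 0)"
    using d by simp
  finally show ?thesis .
qed

lemma phi_sq: assumes x: "x p \<in> carrier_vec d" and n1: "sqrt (x p \<bullet> x p) \<le> 1"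
  shows "(\<Sum>a<(2*k+1)*d. (phi d k x p $ a)^2) \<le> real (2*k+1)"
proof -
  have xx: "x p \<bullet> x p = (\<Sum>r<d. (x p $ r)^2)"
    using x by (simp add: scalar_prod_def lessThan_atLeast0 power2_eq_square)
  have "x p \<bullet> x p \<le> 1" using n1 by simp
  have "(\<Sum>a<(2*k+1)*d. (phi d k x p $ a)^2) \<le> (\<Sum>a<(2*k+1)*d. (x p $ (a mod d))^2)"
  proof (intro sum_mono)
    fix a assume "a \<in> {..<(2*k+1)*d}"
    hence a: "a < (2*k+1)*d" by simp
    show "(phi d k x p $ a)^2 \<le> (x p $ (a mod d))^2" unfolding phi_entry[of x p d, OF x a] by simp
  qed
  also have "\<dots> = (\<Sum>i<2*k+1. \<Sum>r<d. (x p $ ((i*d + r) mod d))^2)"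
    by (rule sum_blocks)
  also have "\<dots> = (\<Sum>i<2*k+1. \<Sum>r<d. (x p $ r)^2)"
    by (intro sum.cong refl, simp)
  also have "\<dots> = real (2*k+1) * (x p \<bullet> x p)" unfolding xx by simp
  also have "\<dots> \<le> real (2*k+1)" using \<open>x p \<bullet> x p \<le> 1\<close> by simp
  finally show ?thesis .
qed



definition sig :: "(nat \<times> nat \<Rightarrow> real) \<Rightarrow> nat \<times> nat \<Rightarrow> real" where
  "sig \<pi> p = \<pi> p * (1 - \<pi> p)"

lemma Vmat_carrier: "Vmat d k \<gamma> lam Eu Et x \<pi> i t \<in> carrier_mat ((2*k+1)*d) ((2*k+1)*d)"
  unfolding Vmat_def by (rule mat_carrier)

lemma Vmat_entry: assumes a: "a < (2*k+1)*d" and b: "b < (2*k+1)*d"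
  shows "Vmat d k \<gamma> lam Eu Et x \<pi> i t $$ (a,b) = V0 d k \<gamma> lam Eu Et $$ (a,b)
     + (\<Sum>p\<in>Obs k i t. sig \<pi> p * (phi d k x p $ a) * (phi d k x p $ b))"
  unfolding Vmat_def sig_def index_mat(1)[OF a b] by (simp only: case_prod_conv)

lemma symm_Vmat: "symm (Vmat d k \<gamma> lam Eu Et x \<pi> i t) ((2*k+1)*d)"
  unfolding symm_def
proof (intro allI impI)
  fix a b assume a: "a < (2*k+1)*d" and b: "b < (2*k+1)*d"
  have "V0 d k \<gamma> lam Eu Et $$ (a,b) = V0 d k \<gamma> lam Eu Et $$ (b,a)"
    using symm_V0[of d k \<gamma> lam Eu Et] a b unfolding symm_def by blast
  thus "Vmat d k \<gamma> lam Eu Et x \<pi> i t $$ (a,b) = Vmat d k \<gamma> lam Eu Et x \<pi> i t $$ (b,a)"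
    unfolding Vmat_entry[OF a b] Vmat_entry[OF b a] by (simp add: mult.commute mult.left_commute)
qed

lemma qf_Vmat: "qf (Vmat d k \<gamma> lam Eu Et x \<pi> i t) ((2*k+1)*d) f = qf (V0 d k \<gamma> lam Eu Et) ((2*k+1)*d) f
   + (\<Sum>p\<in>Obs k i t. sig \<pi> p * (\<Sum>a<(2*k+1)*d. phi d k x p $ a * f a)^2)"
proof -
  let ?n = "(2*k+1)*d"
  let ?V0 = "V0 d k \<gamma> lam Eu Et"
  let ?ph = "\<lambda>p a. phi d k x p $ a"
  have "qf (Vmat d k \<gamma> lam Eu Et x \<pi> i t) ?n f
     = (\<Sum>a<?n. \<Sum>b<?n. f a * ?V0 $$ (a,b) * f b + (\<Sum>p\<in>Obs k i t. sig \<pi> p * ((?ph p a * f a) * (?ph p b * f b))))"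
    unfolding qf_def
    by (intro sum.cong refl, simp add: Vmat_entry distrib_left distrib_right sum_distrib_left sum_distrib_right mult.commute mult.left_commute)
  also have "\<dots> = qf ?V0 ?n f + (\<Sum>a<?n. \<Sum>b<?n. \<Sum>p\<in>Obs k i t. sig \<pi> p * ((?ph p a * f a) * (?ph p b * f b)))"
    unfolding qf_def by (simp add: sum.distrib)
  also have "(\<Sum>a<?n. \<Sum>b<?n. \<Sum>p\<in>Obs k i t. sig \<pi> p * ((?ph p a * f a) * (?ph p b * f b)))
     = (\<Sum>p\<in>Obs k i t. \<Sum>a<?n. \<Sum>b<?n. sig \<pi> p * ((?ph p a * f a) * (?ph p b * f b)))"
    by (subst sum.swap, subst (2) sum.swap, rule refl)
  also have "\<dots> = (\<Sum>p\<in>Obs k i t. sig \<pi> p * (\<Sum>a<?n. ?ph p a * f a)^2)"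
  proof (intro sum.cong refl)
    fix p
    have "(\<Sum>a<?n. ?ph p a * f a)^2 = (\<Sum>a<?n. \<Sum>b<?n. (?ph p a * f a) * (?ph p b * f b))"
      by (simp only: power2_eq_square sum_product)
    thus "(\<Sum>a<?n. \<Sum>b<?n. sig \<pi> p * ((?ph p a * f a) * (?ph p b * f b))) = sig \<pi> p * (\<Sum>a<?n. ?ph p a * f a)^2"
      by (simp only: sum_distrib_left)
  qed
  finally show ?thesis .
qed


lemma sig_bounds: "0 < \<pi> p \<Longrightarrow> \<pi> p < 1 \<Longrightarrow> 0 \<le> sig \<pi> p \<and> sig \<pi> p \<le> 1/4"
proof -
  assume "0 < \<pi> p" "\<pi> p < 1"
  moreover have "sig \<pi> p = 1/4 - (\<pi> p - 1/2)^2" unfolding sig_def by (simp add: power2_eq_square algebra_simps)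
  moreover have "0 \<le> (\<pi> p - 1/2)^2" by simp
  moreover have "0 \<le> sig \<pi> p" unfolding sig_def using \<open>0 < \<pi> p\<close> \<open>\<pi> p < 1\<close> by (intro mult_nonneg_nonneg) auto
  ultimately show ?thesis by linarith
qed

lemma obs_term_bound:
  assumes x: "x p \<in> carrier_vec d" and n1: "sqrt (x p \<bullet> x p) \<le> 1" and pi: "0 < \<pi> p" "\<pi> p < 1"
  shows "0 \<le> sig \<pi> p * (\<Sum>a<(2*k+1)*d. phi d k x p $ a * f a)^2
    \<and> sig \<pi> p * (\<Sum>a<(2*k+1)*d. phi d k x p $ a * f a)^2 \<le> 1/4 * (real (2*k+1) * (\<Sum>a<(2*k+1)*d. (f a)^2))"
proof -
  have s: "0 \<le> sig \<pi> p" "sig \<pi> p \<le> 1/4" using sig_bounds[of \<pi> p, OF pi] by auto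
  have "(\<Sum>a<(2*k+1)*d. phi d k x p $ a * f a)^2 \<le> (\<Sum>a<(2*k+1)*d. (phi d k x p $ a)^2) * (\<Sum>a<(2*k+1)*d. (f a)^2)"
    by (rule cauchy_schwarz_sum)
  also have "\<dots> \<le> real (2*k+1) * (\<Sum>a<(2*k+1)*d. (f a)^2)"
    by (rule mult_right_mono[OF phi_sq[of x p d k, OF x n1]], intro sum_nonneg, auto)
  finally have c: "(\<Sum>a<(2*k+1)*d. phi d k x p $ a * f a)^2 \<le> real (2*k+1) * (\<Sum>a<(2*k+1)*d. (f a)^2)" .
  have "sig \<pi> p * (\<Sum>a<(2*k+1)*d. phi d k x p $ a * f a)^2 \<le> 1/4 * (real (2*k+1) * (\<Sum>a<(2*k+1)*d. (f a)^2))"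
    by (rule mult_mono[OF s(2) c], simp_all add: s(1))
  thus ?thesis using s by simp
qed

lemma qf_Vmat_bounds:
  assumes xs: "\<And>p. p \<in> Obs k i t \<Longrightarrow> x p \<in> carrier_vec d \<and> sqrt (x p \<bullet> x p) \<le> 1"
    and ps: "\<And>p. p \<in> Obs k i t \<Longrightarrow> 0 < \<pi> p \<and> \<pi> p < 1"
  shows "qf (V0 d k \<gamma> lam Eu Et) ((2*k+1)*d) f \<le> qf (Vmat d k \<gamma> lam Eu Et x \<pi> i t) ((2*k+1)*d) f"
    "qf (Vmat d k \<gamma> lam Eu Et x \<pi> i t) ((2*k+1)*d) f \<le> qf (V0 d k \<gamma> lam Eu Et) ((2*k+1)*d) f
       + real (k*k) * (1/4 * (real (2*k+1) * (\<Sum>a<(2*k+1)*d. (f a)^2)))"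
proof -
  let ?T = "\<lambda>p. sig \<pi> p * (\<Sum>a<(2*k+1)*d. phi d k x p $ a * f a)^2"
  let ?K = "1/4 * (real (2*k+1) * (\<Sum>a<(2*k+1)*d. (f a)^2))"
  have tb: "0 \<le> ?T p \<and> ?T p \<le> ?K" if "p \<in> Obs k i t" for p
    using obs_term_bound[of x p d \<pi> k f] xs[OF that] ps[OF that] by auto
  have "0 \<le> sum ?T (Obs k i t)" using tb by (intro sum_nonneg) auto
  thus "qf (V0 d k \<gamma> lam Eu Et) ((2*k+1)*d) f \<le> qf (Vmat d k \<gamma> lam Eu Et x \<pi> i t) ((2*k+1)*d) f"
    unfolding qf_Vmat by simp
  have K0: "0 \<le> ?K" by (intro mult_nonneg_nonneg sum_nonneg, auto)
  have "sum ?T (Obs k i t) \<le> real (card (Obs k i t)) * ?K"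
    using tb by (intro sum_bounded_above) auto
  also have "\<dots> \<le> real (k*k) * ?K"
  proof -
    have "real (card (Obs k i t)) \<le> real (k*k)" using Obs_card[of k i t] by (simp only: of_nat_le_iff)
    thus ?thesis by (rule mult_right_mono[OF _ K0])
  qed
  finally show "qf (Vmat d k \<gamma> lam Eu Et x \<pi> i t) ((2*k+1)*d) f \<le> qf (V0 d k \<gamma> lam Eu Et) ((2*k+1)*d) f
       + real (k*k) * ?K"
    unfolding qf_Vmat by simp
qed



lemma qf_vec: assumes M: "M \<in> carrier_mat n n" and v: "v \<in> carrier_vec n"
  shows "v \<bullet> (M *\<^sub>v v) = qf M n (\<lambda>i. v $ i)"
proof -
  have "v \<bullet> (M *\<^sub>v v) = (\<Sum>i<n. v $ i * (\<Sum>j<n. M $$ (i,j) * v $ j))"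
    using M v by (simp add: scalar_prod_def lessThan_atLeast0)
  also have "\<dots> = qf M n (\<lambda>i. v $ i)"
    unfolding qf_def by (simp add: sum_distrib_left mult.assoc)
  finally show ?thesis .
qed

lemma minv_props: assumes M: "M \<in> carrier_mat n n" and dM: "det M \<noteq> 0"
  shows "minv M \<in> carrier_mat n n \<and> M * minv M = 1\<^sub>m n \<and> minv M * M = 1\<^sub>m n"
proof (cases "mat_inverse M")
  case None
  have "M \<in> Units (ring_mat TYPE(real) n n)" by (rule det_non_zero_imp_unit[OF M dM])
  moreover have "M \<notin> Units (ring_mat TYPE(real) n n)" by (rule mat_inverse(1)[OF M None])
  ultimately show ?thesis by blast
next
  case (Some B)
  from mat_inverse(2)[OF M Some] show ?thesis unfolding minv_def Some by simp
qed

lemma minv_minv: assumes M: "M \<in> carrier_mat n n" and dM: "det M \<noteq> 0"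
  shows "minv (minv M) = M"
proof -
  let ?B = "minv M"
  have B: "?B \<in> carrier_mat n n" "M * ?B = 1\<^sub>m n" "?B * M = 1\<^sub>m n" using minv_props[OF M dM] by auto
  have "det M * det ?B = 1" using det_mult[OF M B(1)] B(2) by simp
  hence dB: "det ?B \<noteq> 0" by auto
  let ?B' = "minv ?B"
  have B': "?B' \<in> carrier_mat n n" "?B * ?B' = 1\<^sub>m n" "?B' * ?B = 1\<^sub>m n" using minv_props[OF B(1) dB] by auto
  have "?B' = ?B' * (?B * M)" using B' by (simp add: B(3))
  also have "\<dots> = (?B' * ?B) * M" using B'(1) B(1) M by (simp add: assoc_mult_mat)
  also have "\<dots> = M" using B' M by simp
  finally show ?thesis .
qed

lemma symm_transpose: fixes M :: "real mat" assumes M: "M \<in> carrier_mat n n" and S: "symm M n"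
  shows "transpose_mat M = M"
  using M S unfolding symm_def by (intro eq_matI, auto)

lemma transpose_symm: fixes M :: "real mat" assumes M: "M \<in> carrier_mat n n" and T: "transpose_mat M = M"
  shows "symm M n"
  unfolding symm_def
proof (intro allI impI)
  fix i j assume "i < n" "j < n"
  hence "transpose_mat M $$ (j,i) = M $$ (i,j)" using M by simp
  thus "M $$ (i,j) = M $$ (j,i)" using T by simp
qed

lemma inv_symm: fixes M B :: "real mat" assumes M: "M \<in> carrier_mat n n" and B: "B \<in> carrier_mat n n"
  and MB: "M * B = 1\<^sub>m n" and BM: "B * M = 1\<^sub>m n" and T: "transpose_mat M = M"
  shows "transpose_mat B = B"
proof -
  have "transpose_mat B * M = 1\<^sub>m n"
    using transpose_mult[OF M B] MB T by simp
  have "transpose_mat B = transpose_mat B * (M * B)" using MB B by simp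
  also have "\<dots> = (transpose_mat B * M) * B" using B M by (simp add: assoc_mult_mat)
  also have "\<dots> = B" using \<open>transpose_mat B * M = 1\<^sub>m n\<close> B by simp
  finally show ?thesis .
qed



lemma gsym: fixes W U :: "real mat"
  assumes W: "W \<in> carrier_mat n m" and U: "U \<in> carrier_mat n n" and T: "transpose_mat U = U"
  shows "transpose_mat (transpose_mat W * U * W) = transpose_mat W * U * W"
proof -
  have WU: "transpose_mat W * U \<in> carrier_mat m n" using W U by simp
  have "transpose_mat (transpose_mat W * U * W) = transpose_mat W * transpose_mat (transpose_mat W * U)"
    by (rule transpose_mult[OF WU W])
  also have "transpose_mat (transpose_mat W * U) = transpose_mat U * W"
    using transpose_mult[of "transpose_mat W" m n U n] W U by simp
  also have "transpose_mat W * (transpose_mat U * W) = transpose_mat W * (U * W)" using T by simp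
  also have "\<dots> = transpose_mat W * U * W"
  proof -
    have Wt: "transpose_mat W \<in> carrier_mat m n" using W by simp
    show ?thesis by (rule assoc_mult_mat[OF Wt U W, symmetric])
  qed
  finally show ?thesis .
qed

lemma mu_bound:
  fixes k :: nat and \<gamma> lam :: real and e :: nat
  assumes k: "1 \<le> k" and g: "1 \<le> \<gamma>" and lam: "0 \<le> lam"
  shows "1 + real (k*k) * (1/4 * real (2*k+1)) \<le> (3 * real k * (real k + 1) / 8 + \<gamma> * real k + 2 * lam * real e)^2"
proof -
  define r where "r = real k"
  have r1: "1 \<le> r" using k unfolding r_def by simp
  define b0 where "b0 = 3 * r * (r + 1) / 8 + r"
  have "r \<le> \<gamma> * r" using g r1 by (simp add: mult_right_mono[of 1 \<gamma> r, simplified])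
  moreover have "0 \<le> 2 * lam * real e" using lam by simp
  ultimately have bb: "b0 \<le> 3 * r * (r + 1) / 8 + \<gamma> * r + 2 * lam * real e" unfolding b0_def by linarith
  have b0p: "0 \<le> b0" using r1 unfolding b0_def by simp
  have "b0^2 \<le> (3 * r * (r + 1) / 8 + \<gamma> * r + 2 * lam * real e)^2"
    by (rule power_mono[OF bb b0p])
  moreover have "1 + r*r * (1/4 * (2*r+1)) \<le> b0^2"
  proof -
    have r2: "1 \<le> r*r" using mult_mono[OF r1 r1] r1 by simp
    have r3: "0 \<le> r*r*r" using r1 by simp
    have r4: "0 \<le> r*r*r*r" using r1 by simp
    have "b0^2 - (1 + r*r * (1/4 * (2*r+1))) = (9*(r*r*r*r) + 34*(r*r*r) + 105*(r*r) - 64) / 64"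
      unfolding b0_def by (simp add: power2_eq_square field_simps)
    also have "\<dots> \<ge> 0" using r2 r3 r4 by simp
    finally show ?thesis by simp
  qed
  ultimately have "1 + r*r * (1/4 * (2*r+1)) \<le> (3 * r * (r + 1) / 8 + \<gamma> * r + 2 * lam * real e)^2"
    by linarith
  moreover have "real (k*k) * (1/4 * real (2*k+1)) = r*r * (1/4 * (2*r+1))" unfolding r_def by simp
  ultimately show ?thesis unfolding r_def by linarith
qed



theorem lemmaE11:
  fixes d k i t :: nat and \<gamma> lam :: real
    and Eu Et :: "(nat \<times> nat) list"
    and x :: "nat \<times> nat \<Rightarrow> real vec" and \<pi> :: "nat \<times> nat \<Rightarrow> real"
  assumes "1 \<le> d" and "1 \<le> k"
    and "1 \<le> i" and "1 \<le> t" and "i + t - 1 \<le> k"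
    and "\<gamma> \<ge> 1" and "lam \<ge> 0"
    and "simple_graph k Eu" and "simple_graph k Et"
    and "\<And>p. p \<in> Obs k i t \<Longrightarrow> x p \<in> carrier_vec d \<and> sqrt (x p \<bullet> x p) \<le> 1"
    and "\<And>p. p \<in> Obs k i t \<Longrightarrow> 0 < \<pi> p \<and> \<pi> p < 1"
  shows "ln (det (minv (Vbar d k \<gamma> lam Eu Et x \<pi> i t)) / det (Lambda0 d k \<gamma> lam Eu Et x \<pi> i t))
         \<le> 2 * real d * ln (3 * real k * (real k + 1) / 8 + \<gamma> * real k
                              + 2 * lam * real (length Eu + length Et))"
proof -
  note xs = assms(10) and ps = assms(11)
  have g1: "1 \<le> \<gamma>" and lam: "0 \<le> lam" using assms by auto
  define n where "n = (2*k+1)*d"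
  define V where "V = Vmat d k \<gamma> lam Eu Et x \<pi> i t"
  define U where "U = V0 d k \<gamma> lam Eu Et"
  define C where "C = Cmat d k i t"
  have Vc: "V \<in> carrier_mat n n" unfolding V_def n_def by (rule Vmat_carrier)
  have Uc: "U \<in> carrier_mat n n" unfolding U_def n_def by (rule V0_carrier)
  have Cc: "C \<in> carrier_mat d n" unfolding C_def n_def by (rule Cmat_carrier)
  have CTc: "transpose_mat C \<in> carrier_mat n d" using Cc by simp
  have sV: "symm V n" unfolding V_def n_def by (rule symm_Vmat)
  have sU: "symm U n" unfolding U_def n_def by (rule symm_V0)
  have Ulow: "\<gamma> * (\<Sum>j<n. (f j)^2) \<le> qf U n f" for f
    unfolding U_def n_def by (rule qf_V0[OF lam])
  have Vlow: "qf U n f \<le> qf V n f" for f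
    unfolding U_def V_def n_def by (rule qf_Vmat_bounds(1)[OF xs ps])
  have Vup: "qf V n f \<le> qf U n f + real (k*k) * (1/4 * (real (2*k+1) * (\<Sum>a<n. (f a)^2)))" for f
    unfolding U_def V_def n_def by (rule qf_Vmat_bounds(2)[OF xs ps])
  have sqpos: "0 < (\<Sum>j<n. (f j)^2)" if "\<exists>j<n. f j \<noteq> 0" for f :: "nat \<Rightarrow> real"
  proof -
    from that obtain j where j: "j < n" "f j \<noteq> 0" by auto
    have "(f j)^2 \<le> (\<Sum>j<n. (f j)^2)" using j by (intro member_le_sum) auto
    moreover have "0 < (f j)^2" using j by simp
    ultimately show ?thesis by linarith
  qed
  have sqnn: "0 \<le> (\<Sum>j<n. (f j)^2)" for f :: "nat \<Rightarrow> real" by (intro sum_nonneg) auto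
  have pdU: "0 < qf U n f" if "\<exists>j<n. f j \<noteq> 0" for f
  proof -
    have "0 < \<gamma> * (\<Sum>j<n. (f j)^2)" using g1 sqpos[OF that] by simp
    thus ?thesis using Ulow[of f] by linarith
  qed
  have pdV: "\<forall>f. (\<exists>j<n. f j \<noteq> 0) \<longrightarrow> 0 < qf V n f"
    using pdU Vlow by (meson less_le_trans)
  have dV: "det V \<noteq> 0"
    using det_mono[OF Vc Vc sV sV pdV] by auto
  define B where "B = minv V"
  have Bc: "B \<in> carrier_mat n n" and VB: "V * B = 1\<^sub>m n" and BV: "B * V = 1\<^sub>m n"
    using minv_props[OF Vc dV] unfolding B_def by auto
  have tV: "transpose_mat V = V" by (rule symm_transpose[OF Vc sV])
  have tU: "transpose_mat U = U" by (rule symm_transpose[OF Uc sU])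
  have tB: "transpose_mat B = B" by (rule inv_symm[OF Vc Bc VB BV tV])
  define W where "W = B * transpose_mat C"
  have Wc: "W \<in> carrier_mat n d" unfolding W_def using Bc CTc by simp
  define A where "A = C * B * transpose_mat C"
  define L where "L = C * B * U * B * transpose_mat C"
  have Ac: "A \<in> carrier_mat d d" unfolding A_def using Cc Bc CTc by simp
  have CB: "C * B \<in> carrier_mat d n" by (rule mult_carrier_mat[OF Cc Bc])
  have CBU: "C * B * U \<in> carrier_mat d n" by (rule mult_carrier_mat[OF CB Uc])
  have CBUB: "C * B * U * B \<in> carrier_mat d n" by (rule mult_carrier_mat[OF CBU Bc])
  have Lc: "L \<in> carrier_mat d d" unfolding L_def by (rule mult_carrier_mat[OF CBUB CTc])
  have Vbar_eq: "Vbar d k \<gamma> lam Eu Et x \<pi> i t = minv A"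
    unfolding Vbar_def A_def B_def V_def C_def ..
  have L_eq: "Lambda0 d k \<gamma> lam Eu Et x \<pi> i t = L"
    unfolding Lambda0_def L_def B_def V_def C_def U_def ..
  have kA: "y \<bullet> (A *\<^sub>v y) = (W *\<^sub>v y) \<bullet> (V *\<^sub>v (W *\<^sub>v y))" if y: "y \<in> carrier_vec d" for y
  proof -
    let ?w = "W *\<^sub>v y"
    have wc: "?w \<in> carrier_vec n" using Wc y by simp
    have z: "transpose_mat C *\<^sub>v y \<in> carrier_vec n" using CTc y by simp
    have wB: "?w = B *\<^sub>v (transpose_mat C *\<^sub>v y)"
      unfolding W_def using assoc_mult_mat_vec[OF Bc CTc y] by simp
    have "A *\<^sub>v y = (C * B) *\<^sub>v (transpose_mat C *\<^sub>v y)"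
      unfolding A_def by (rule assoc_mult_mat_vec[OF CB CTc y])
    also have "\<dots> = C *\<^sub>v ?w" unfolding wB by (rule assoc_mult_mat_vec[OF Cc Bc z])
    finally have "A *\<^sub>v y = C *\<^sub>v ?w" .
    hence "y \<bullet> (A *\<^sub>v y) = (transpose_mat C *\<^sub>v y) \<bullet> ?w"
      using transpose_vec_mult_scalar[OF Cc wc y] by simp
    also have "transpose_mat C *\<^sub>v y = V *\<^sub>v ?w"
    proof -
      have "V *\<^sub>v ?w = V *\<^sub>v (B *\<^sub>v (transpose_mat C *\<^sub>v y))"
        unfolding W_def using assoc_mult_mat_vec[OF Bc CTc y] by simp
      also have "\<dots> = (V * B) *\<^sub>v (transpose_mat C *\<^sub>v y)"
        using assoc_mult_mat_vec[OF Vc Bc z] by simp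
      also have "\<dots> = transpose_mat C *\<^sub>v y" unfolding VB using z by simp
      finally show ?thesis by simp
    qed
    also have "(V *\<^sub>v ?w) \<bullet> ?w = ?w \<bullet> (V *\<^sub>v ?w)"
      using Vc wc by (intro comm_scalar_prod[of _ n]) auto
    finally show ?thesis .
  qed
  have kL: "y \<bullet> (L *\<^sub>v y) = (W *\<^sub>v y) \<bullet> (U *\<^sub>v (W *\<^sub>v y))" if y: "y \<in> carrier_vec d" for y
  proof -
    let ?w = "W *\<^sub>v y"
    have wc: "?w \<in> carrier_vec n" using Wc y by simp
    have z: "transpose_mat C *\<^sub>v y \<in> carrier_vec n" using CTc y by simp
    have uw: "U *\<^sub>v ?w \<in> carrier_vec n" using Uc wc by simp
    have vw: "V *\<^sub>v ?w \<in> carrier_vec n" using Vc wc by simp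
    have buw: "B *\<^sub>v (U *\<^sub>v ?w) \<in> carrier_vec n" using Bc uw by simp
    have wB: "?w = B *\<^sub>v (transpose_mat C *\<^sub>v y)"
      unfolding W_def using assoc_mult_mat_vec[OF Bc CTc y] by simp
    have "L *\<^sub>v y = (C * B * U * B) *\<^sub>v (transpose_mat C *\<^sub>v y)"
      unfolding L_def by (rule assoc_mult_mat_vec[OF CBUB CTc y])
    also have "\<dots> = (C * B * U) *\<^sub>v ?w"
      unfolding wB by (rule assoc_mult_mat_vec[OF CBU Bc z])
    also have "\<dots> = (C * B) *\<^sub>v (U *\<^sub>v ?w)" by (rule assoc_mult_mat_vec[OF CB Uc wc])
    also have "\<dots> = C *\<^sub>v (B *\<^sub>v (U *\<^sub>v ?w))" by (rule assoc_mult_mat_vec[OF Cc Bc uw])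
    finally have "L *\<^sub>v y = C *\<^sub>v (B *\<^sub>v (U *\<^sub>v ?w))" .
    hence "y \<bullet> (L *\<^sub>v y) = (transpose_mat C *\<^sub>v y) \<bullet> (B *\<^sub>v (U *\<^sub>v ?w))"
      using transpose_vec_mult_scalar[OF Cc buw y] by simp
    also have "transpose_mat C *\<^sub>v y = V *\<^sub>v ?w"
    proof -
      have "V *\<^sub>v ?w = (V * B) *\<^sub>v (transpose_mat C *\<^sub>v y)"
        unfolding wB using assoc_mult_mat_vec[OF Vc Bc z] by simp
      also have "\<dots> = transpose_mat C *\<^sub>v y" unfolding VB using z by simp
      finally show ?thesis by simp
    qed
    also have "(V *\<^sub>v ?w) \<bullet> (B *\<^sub>v (U *\<^sub>v ?w)) = (transpose_mat B *\<^sub>v (V *\<^sub>v ?w)) \<bullet> (U *\<^sub>v ?w)"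
      using transpose_vec_mult_scalar[OF Bc uw vw] by simp
    also have "transpose_mat B *\<^sub>v (V *\<^sub>v ?w) = ?w"
      unfolding tB using assoc_mult_mat_vec[OF Bc Vc wc] BV wc by simp
    finally show ?thesis .
  qed
  define wf where "wf f = (\<lambda>j. (W *\<^sub>v vec d f) $ j)" for f
  have QA: "qf A d f = qf V n (wf f)" for f
  proof -
    have wc: "W *\<^sub>v vec d f \<in> carrier_vec n" using Wc by simp
    have "qf A d f = qf A d (\<lambda>j. vec d f $ j)" by (rule qf_cong) simp
    also have "\<dots> = vec d f \<bullet> (A *\<^sub>v vec d f)" by (rule qf_vec[symmetric, OF Ac vec_carrier])
    also have "\<dots> = (W *\<^sub>v vec d f) \<bullet> (V *\<^sub>v (W *\<^sub>v vec d f))" by (rule kA[OF vec_carrier])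
    also have "\<dots> = qf V n (wf f)" unfolding wf_def by (rule qf_vec[OF Vc wc])
    finally show ?thesis .
  qed
  have QL: "qf L d f = qf U n (wf f)" for f
  proof -
    have wc: "W *\<^sub>v vec d f \<in> carrier_vec n" using Wc by simp
    have "qf L d f = qf L d (\<lambda>j. vec d f $ j)" by (rule qf_cong) simp
    also have "\<dots> = vec d f \<bullet> (L *\<^sub>v vec d f)" by (rule qf_vec[symmetric, OF Lc vec_carrier])
    also have "\<dots> = (W *\<^sub>v vec d f) \<bullet> (U *\<^sub>v (W *\<^sub>v vec d f))" by (rule kL[OF vec_carrier])
    also have "\<dots> = qf U n (wf f)" unfolding wf_def by (rule qf_vec[OF Uc wc])
    finally show ?thesis .
  qed
  have nz: "\<exists>j<n. wf f j \<noteq> 0" if "\<exists>j<d. f j \<noteq> 0" for f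
  proof (rule ccontr)
    assume "\<not> (\<exists>j<n. wf f j \<noteq> 0)"
    hence w0: "\<forall>j<n. (W *\<^sub>v vec d f) $ j = 0" unfolding wf_def by auto
    let ?y = "vec d f"
    let ?w = "W *\<^sub>v ?y"
    have z: "transpose_mat C *\<^sub>v ?y \<in> carrier_vec n" using CTc by simp
    have wB: "?w = B *\<^sub>v (transpose_mat C *\<^sub>v ?y)"
      unfolding W_def using assoc_mult_mat_vec[OF Bc CTc vec_carrier] by simp
    have "V *\<^sub>v ?w = (V * B) *\<^sub>v (transpose_mat C *\<^sub>v ?y)"
      unfolding wB using assoc_mult_mat_vec[OF Vc Bc z] by simp
    also have "\<dots> = transpose_mat C *\<^sub>v ?y" unfolding VB using z by simp
    finally have eq: "transpose_mat C *\<^sub>v ?y = V *\<^sub>v ?w" by simp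
    have "(V *\<^sub>v ?w) $ r = 0" if "r < n" for r
      using that Vc Wc w0 by (simp add: scalar_prod_def)
    hence z0: "(transpose_mat C *\<^sub>v ?y) $ r = 0" if "r < n" for r using eq that by simp
    from \<open>\<exists>j<d. f j \<noteq> 0\<close> obtain r where r: "r < d" "f r \<noteq> 0" by auto
    have rn: "r < (2*k+1)*d" using r(1) by (simp add: less_le_trans[of r d])
    have "phi d k (\<lambda>_. ?y) (i,t) $ r = (if r div d = 0 \<or> r div d = fst (i,t) \<or> r div d = k + snd (i,t) then ?y $ (r mod d) else 0)"
      by (rule phi_entry[of "\<lambda>_. ?y" "(i,t)" d r k], simp, rule rn)
    also have "\<dots> = f r" using r by simp
    finally have "(transpose_mat C *\<^sub>v ?y) $ r = f r" unfolding phi_def C_def by simp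
    with z0[of r] rn r show False unfolding n_def by simp
  qed
  have sA: "symm A d"
  proof -
    have "transpose_mat (transpose_mat (transpose_mat C) * B * transpose_mat C) = transpose_mat (transpose_mat C) * B * transpose_mat C"
      by (rule gsym[OF CTc Bc tB])
    hence "transpose_mat A = A" unfolding A_def by simp
    thus ?thesis by (rule transpose_symm[OF Ac])
  qed
  have sL: "symm L d"
  proof -
    have tW: "transpose_mat W = C * B" unfolding W_def using transpose_mult[OF Bc CTc] tB by simp
    have "L = (C * B * U) * (B * transpose_mat C)" unfolding L_def by (rule assoc_mult_mat[OF CBU Bc CTc])
    also have "\<dots> = transpose_mat W * U * W" unfolding tW by (simp only: W_def)
    finally have LW: "L = transpose_mat W * U * W" .
    have "transpose_mat L = L" unfolding LW by (rule gsym[OF Wc Uc tU])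
    thus ?thesis by (rule transpose_symm[OF Lc])
  qed
  define mu where "mu = 1 + real (k*k) * (1/4 * real (2*k+1))"
  have mu1: "1 \<le> mu" unfolding mu_def by simp
  have pdA: "\<forall>f. (\<exists>j<d. f j \<noteq> 0) \<longrightarrow> 0 < qf A d f"
    using pdV nz QA by auto
  have pdL: "\<forall>f. (\<exists>j<d. f j \<noteq> 0) \<longrightarrow> 0 < qf L d f"
    using pdU nz QL by auto
  have muLc: "mu \<cdot>\<^sub>m L \<in> carrier_mat d d" using Lc by simp
  have smuL: "symm (mu \<cdot>\<^sub>m L) d" using sL Lc unfolding symm_def by simp
  have le: "\<forall>f. qf A d f \<le> qf (mu \<cdot>\<^sub>m L) d f"
  proof
    fix f
    let ?w = "wf f"
    have s: "(\<Sum>a<n. (?w a)^2) \<le> qf U n ?w"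
      using Ulow[of ?w] mult_right_mono[OF g1 sqnn[of ?w]] by linarith
    have "qf A d f = qf V n ?w" by (rule QA)
    also have "\<dots> \<le> qf U n ?w + real (k*k) * (1/4 * (real (2*k+1) * (\<Sum>a<n. (?w a)^2)))" by (rule Vup)
    also have "\<dots> \<le> qf U n ?w + real (k*k) * (1/4 * (real (2*k+1) * qf U n ?w))"
      using s by (intro add_left_mono mult_left_mono) auto
    also have "\<dots> = mu * qf U n ?w" unfolding mu_def by (simp add: algebra_simps)
    also have "\<dots> = qf (mu \<cdot>\<^sub>m L) d f" unfolding qf_smult[OF Lc] QL ..
    finally show "qf A d f \<le> qf (mu \<cdot>\<^sub>m L) d f" .
  qed
  have dA: "0 < det A \<and> det A \<le> det (mu \<cdot>\<^sub>m L)"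
    by (rule det_mono[OF Ac muLc sA smuL pdA le])
  have dL: "0 < det L" using det_mono[OF Lc Lc sL sL pdL] by auto
  have dmuL: "det (mu \<cdot>\<^sub>m L) = mu ^ d * det L" using Lc by simp
  have inv: "minv (Vbar d k \<gamma> lam Eu Et x \<pi> i t) = A"
    unfolding Vbar_eq using minv_minv[OF Ac] dA by simp
  have r0: "0 < det A / det L" using dA dL by simp
  have "det A \<le> mu ^ d * det L" using dA unfolding dmuL by blast
  hence r1: "det A / det L \<le> mu ^ d" unfolding pos_divide_le_eq[OF dL] .
  define Bv where "Bv = 3 * real k * (real k + 1) / 8 + \<gamma> * real k + 2 * lam * real (length Eu + length Et)"
  have muB: "mu \<le> Bv^2" unfolding mu_def Bv_def by (rule mu_bound[OF assms(2) g1 lam])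
  have Bv0: "0 < Bv"
  proof -
    have k1: "1 \<le> real k" using assms(2) by simp
    have "1 * 1 \<le> \<gamma> * real k" by (rule mult_mono[OF g1 k1]) (use g1 in auto)
    moreover have "0 \<le> 3 * real k * (real k + 1) / 8" by simp
    moreover have "0 \<le> 2 * lam * real (length Eu + length Et)" using lam by simp
    ultimately show ?thesis unfolding Bv_def by linarith
  qed
  have mud: "0 < mu ^ d" using mu1 by simp
  have "ln (det A / det L) \<le> ln (mu ^ d)" using ln_le_cancel_iff[OF r0 mud] r1 by simp
  also have "\<dots> = real d * ln mu" using mu1 by (simp add: ln_realpow)
  also have "\<dots> \<le> real d * ln (Bv^2)"
  proof (rule mult_left_mono)
    have "0 < mu" using mu1 by simp
    moreover have "0 < Bv^2" using Bv0 by simp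
    ultimately show "ln mu \<le> ln (Bv^2)" using ln_le_cancel_iff muB by blast
  qed simp
  also have "\<dots> = 2 * real d * ln Bv" using Bv0 by (simp add: ln_realpow)
  finally show ?thesis unfolding inv L_eq Bv_def .
qed


end
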